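(* Let $\mathbb{X},\mathbb{Y}$ be real normed linear spaces and let $T\in\mathbb{B}(\mathbb{X},\mathbb{Y})$, $T\neq 0$. Then the following are equivalent: (i) $T$ is a smooth point of $\mathbb{B}(\mathbb{X},\mathbb{Y})$ (with the operator norm). (ii) For every $A\in\mathbb{B}(\mathbb{X},\mathbb{Y})$: $T\perp_B A$ if and only if for every semi-inner-product $[\cdot,\cdot]$ on $\mathbb{Y}$ compatible with the norm and every norming sequence $\{x_n\}$ for $T$, every subsequential limit of the real sequence $\{[Ax_n,Tx_n]\}$ equals $0$. *)

theory Defs
  imports "HOL-Analysis.Analysis"
begin

definition smooth_point :: "'a::real_normed_vector \<Rightarrow> bool" where
  "smooth_point x \<longleftrightarrow> x \<noteq> 0 \<and>
     (\<exists>!f :: 'a \<Rightarrow>\<^sub>L real. norm f = 1 \<and> blinfun_apply f x = norm x)"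

definition bj_orth :: "'a::real_normed_vector \<Rightarrow> 'a \<Rightarrow> bool" where
  "bj_orth x y \<longleftrightarrow> (\<forall>t::real. norm x \<le> norm (x + t *\<^sub>R y))"

definition is_sip :: "('b::real_normed_vector \<Rightarrow> 'b \<Rightarrow> real) \<Rightarrow> bool" where
  "is_sip s \<longleftrightarrow>
     (\<forall>x y z. s (x + y) z = s x z + s y z) \<and>
     (\<forall>(a::real) x y. s (a *\<^sub>R x) y = a * s x y) \<and>
     (\<forall>(a::real) x y. s x (a *\<^sub>R y) = a * s x y) \<and>
     (\<forall>x. s x x = (norm x)\<^sup>2) \<and>
     (\<forall>x y. (s x y)\<^sup>2 \<le> s x x * s y y)"

definition norming_seq :: "('a::real_normed_vector \<Rightarrow>\<^sub>L 'b::real_normed_vector) \<Rightarrow> (nat \<Rightarrow> 'a) \<Rightarrow> bool" where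
  "norming_seq T xs \<longleftrightarrow> (\<forall>n. norm (xs n) = 1) \<and>
     (\<lambda>n. norm (blinfun_apply T (xs n))) \<longlonglongrightarrow> norm T"

definition subseq_limit :: "(nat \<Rightarrow> real) \<Rightarrow> real \<Rightarrow> bool" where
  "subseq_limit a L \<longleftrightarrow> (\<exists>r. strict_mono r \<and> (a \<circ> r) \<longlonglongrightarrow> L)"

end

theory Submission
  imports Defs
begin


definition good :: "('v::real_vector \<Rightarrow> real) \<Rightarrow> ('v \<times> real) set \<Rightarrow> ('v \<times> real) set \<Rightarrow> bool" where
 "good p G0 G \<longleftrightarrow> G0 \<subseteq> G \<and> (0,0) \<in> G \<and>
   (\<forall>x a y b. (x,a)\<in>G \<longrightarrow> (y,b)\<in>G \<longrightarrow> (x+y,a+b)\<in>G) \<and>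
   (\<forall>c x a. (x,a)\<in>G \<longrightarrow> (c *\<^sub>R x, c*a)\<in>G) \<and>
   (\<forall>x a. (x,a)\<in>G \<longrightarrow> a \<le> p x)"

lemma good_chain:
  assumes "good p G0 G0" "C \<in> chains {G. good p G0 G}"
  shows "\<exists>U\<in>{G. good p G0 G}. \<forall>X\<in>C. X \<subseteq> U"
proof (cases "C = {}")
  case True then show ?thesis using assms(1) by auto
next
  case False
  have CA: "\<And>G. G \<in> C \<Longrightarrow> good p G0 G" and ch: "\<And>A B. A \<in> C \<Longrightarrow> B \<in> C \<Longrightarrow> A \<subseteq> B \<or> B \<subseteq> A"
    using assms(2) unfolding chains_def chain_subset_def by auto
  have "good p G0 (\<Union>C)"
    unfolding good_def
  proof (intro conjI allI impI)
    show "G0 \<subseteq> \<Union>C" using False CA unfolding good_def by blast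
    show "(0,0) \<in> \<Union>C" using False CA unfolding good_def by blast
    fix x a y b assume "(x,a) \<in> \<Union>C" "(y,b) \<in> \<Union>C"
    then obtain A B where AB: "A \<in> C" "B \<in> C" "(x,a) \<in> A" "(y,b) \<in> B" by auto
    show "(x+y,a+b) \<in> \<Union>C"
    proof (cases "A \<subseteq> B")
      case True then show ?thesis using AB CA[of B] unfolding good_def by blast
    next
      case False then have "B \<subseteq> A" using ch AB by blast
      then show ?thesis using AB CA[of A] unfolding good_def by blast
    qed
  next
    fix c x a assume "(x,a) \<in> \<Union>C"
    then show "(c *\<^sub>R x, c*a) \<in> \<Union>C" using CA unfolding good_def by blast
  next
    fix x a assume "(x,a) \<in> \<Union>C"
    then show "a \<le> p x" using CA unfolding good_def by blast
  qed
  then show ?thesis by blast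
qed

lemma good_unique:
  assumes "good p G0 G" "(x,a) \<in> G" "(x,b) \<in> G" "p 0 = 0"
  shows "a = b"
proof -
  have "(x + (-1) *\<^sub>R x, a + (-1)*b) \<in> G" "(x + (-1) *\<^sub>R x, b + (-1)*a) \<in> G"
    using assms unfolding good_def by blast+
  then have "a - b \<le> p 0" "b - a \<le> p 0" using assms(1) unfolding good_def by fastforce+
  then show ?thesis using assms(4) by linarith
qed

lemma good_extend:
  fixes p :: "'v::real_vector \<Rightarrow> real"
  assumes sub: "\<And>x y. p (x+y) \<le> p x + p y" and hom: "\<And>c x. 0 < c \<Longrightarrow> p (c *\<^sub>R x) = c * p x"
    and gM: "good p G0 M" and nx: "\<forall>a. (x0,a) \<notin> M"
  shows "\<exists>M'. good p G0 M' \<and> M \<subseteq> M' \<and> M' \<noteq> M"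
proof -
  have addM: "\<And>x a y b. (x,a)\<in>M \<Longrightarrow> (y,b)\<in>M \<Longrightarrow> (x+y,a+b)\<in>M"
    and scM: "\<And>c x a. (x,a)\<in>M \<Longrightarrow> (c *\<^sub>R x, c*a)\<in>M"
    and domM: "\<And>x a. (x,a)\<in>M \<Longrightarrow> a \<le> p x" and zM: "(0,0) \<in> M" and G0M: "G0 \<subseteq> M"
    using gM unfolding good_def by blast+
  have key: "b1 - p (y1 - x0) \<le> p (y2 + x0) - b2" if "(y1,b1)\<in>M" "(y2,b2)\<in>M" for y1 b1 y2 b2
  proof -
    have "b1 + b2 \<le> p (y1 + y2)" using addM[OF that] domM by blast
    also have "y1 + y2 = (y1 - x0) + (y2 + x0)" by simp
    finally show ?thesis using sub[of "y1 - x0" "y2 + x0"] by linarith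
  qed
  define S where "S = {b - p (y - x0) | y b. (y,b) \<in> M}"
  define c where "c = Sup S"
  have Sne: "S \<noteq> {}" using zM unfolding S_def by blast
  have Sbdd: "bdd_above S" unfolding S_def bdd_above_def
    using key[OF _ zM] by auto
  have clo: "b - p (y - x0) \<le> c" if "(y,b)\<in>M" for y b
    unfolding c_def by (rule cSup_upper[OF _ Sbdd]) (use that S_def in blast)
  have chi: "c \<le> p (y + x0) - b" if "(y,b)\<in>M" for y b
    unfolding c_def by (rule cSup_least[OF Sne]) (use that key S_def in blast)
  define M' where "M' = {(y + t *\<^sub>R x0, b + t*c) | y b t. (y,b)\<in>M}"
  have dom': "b + t*c \<le> p (y + t *\<^sub>R x0)" if "(y,b)\<in>M" for y b t
  proof -
    consider "t = 0" | "t > 0" | "t < 0" by linarith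
    then show ?thesis
    proof cases
      case 1 then show ?thesis using domM that by simp
    next
      case 2
      have "((1/t) *\<^sub>R y, (1/t)*b) \<in> M" using scM that by blast
      from chi[OF this] have "t * c \<le> t * (p ((1/t) *\<^sub>R y + x0) - (1/t)*b)"
        using 2 by (simp add: mult_left_mono)
      also have "\<dots> = t * p ((1/t) *\<^sub>R y + x0) - b" using 2 by (simp add: algebra_simps)
      also have "t * p ((1/t) *\<^sub>R y + x0) = p (t *\<^sub>R ((1/t) *\<^sub>R y + x0))" using hom[OF 2] by simp
      also have "t *\<^sub>R ((1/t) *\<^sub>R y + x0) = y + t *\<^sub>R x0" using 2 by (simp add: algebra_simps)
      finally show ?thesis by linarith
    next
      case 3
      define u where "u = -t"
      have u: "u > 0" using 3 u_def by simp
      have "((1/u) *\<^sub>R y, (1/u)*b) \<in> M" using scM that by blast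
      from clo[OF this] have "u * ((1/u)*b - p ((1/u) *\<^sub>R y - x0)) \<le> u * c"
        using u by (simp add: mult_left_mono)
      also have "u * ((1/u)*b - p ((1/u) *\<^sub>R y - x0)) = b - u * p ((1/u) *\<^sub>R y - x0)"
        using u by (simp add: algebra_simps)
      also have "u * p ((1/u) *\<^sub>R y - x0) = p (u *\<^sub>R ((1/u) *\<^sub>R y - x0))" using hom[OF u] by simp
      also have "u *\<^sub>R ((1/u) *\<^sub>R y - x0) = y + t *\<^sub>R x0" using u u_def by (simp add: algebra_simps)
      finally show ?thesis using u_def by simp
    qed
  qed
  have "good p G0 M'"
    unfolding good_def
  proof (intro conjI allI impI)
    show "G0 \<subseteq> M'" unfolding M'_def using G0M by force
    show "(0,0) \<in> M'" unfolding M'_def using zM by force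
    fix x a y b assume "(x,a) \<in> M'" "(y,b) \<in> M'"
    then obtain y1 b1 t1 y2 b2 t2 where h: "(y1,b1)\<in>M" "(y2,b2)\<in>M" "x = y1 + t1 *\<^sub>R x0" "a = b1 + t1*c"
      "y = y2 + t2 *\<^sub>R x0" "b = b2 + t2*c" unfolding M'_def by blast
    have "(y1+y2, b1+b2) \<in> M" using addM h by blast
    moreover have "x + y = (y1+y2) + (t1+t2) *\<^sub>R x0" "a + b = (b1+b2) + (t1+t2)*c"
      using h by (simp_all add: algebra_simps)
    ultimately show "(x+y,a+b) \<in> M'" unfolding M'_def by blast
  next
    fix d x a assume "(x,a) \<in> M'"
    then obtain y1 b1 t1 where h: "(y1,b1)\<in>M" "x = y1 + t1 *\<^sub>R x0" "a = b1 + t1*c"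
      unfolding M'_def by blast
    have "(d *\<^sub>R y1, d*b1) \<in> M" using scM h by blast
    moreover have "d *\<^sub>R x = d *\<^sub>R y1 + (d*t1) *\<^sub>R x0" "d * a = d*b1 + (d*t1)*c"
      using h by (simp_all add: algebra_simps)
    ultimately show "(d *\<^sub>R x, d*a) \<in> M'" unfolding M'_def by blast
  next
    fix x a assume "(x,a) \<in> M'"
    then show "a \<le> p x" unfolding M'_def using dom' by blast
  qed
  moreover have "M \<subseteq> M'" unfolding M'_def by force
  moreover have "(x0, c) \<in> M'" unfolding M'_def using zM by force
  ultimately show ?thesis using nx by blast
qed

lemma hahn_banach:
  fixes p :: "'v::real_vector \<Rightarrow> real"
  assumes sub: "\<And>x y. p (x+y) \<le> p x + p y" and hom: "\<And>c x. 0 < c \<Longrightarrow> p (c *\<^sub>R x) = c * p x"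
    and g0: "good p G0 G0"
  shows "\<exists>g. linear g \<and> (\<forall>x. g x \<le> p x) \<and> (\<forall>x a. (x,a)\<in>G0 \<longrightarrow> g x = a)"
proof -
  have p0: "p 0 = 0" using hom[of 2 0] by simp
  obtain M where M: "M \<in> {G. good p G0 G}" and mx: "\<forall>X\<in>{G. good p G0 G}. M \<subseteq> X \<longrightarrow> X = M"
    using Zorn_Lemma2[of "{G. good p G0 G}"] good_chain[OF g0] by blast
  have gM: "good p G0 M" using M by simp
  have ex: "\<exists>a. (x,a) \<in> M" for x
    using good_extend[OF sub hom gM, of x] mx by blast
  have un: "(x,a) \<in> M \<Longrightarrow> (x,b) \<in> M \<Longrightarrow> a = b" for x a b using good_unique[OF gM _ _ p0] by blast
  define g where "g x = (THE a. (x,a) \<in> M)" for x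
  have gx: "(x, g x) \<in> M" for x unfolding g_def using ex[of x] un by (metis theI)
  have geq: "(x,a) \<in> M \<Longrightarrow> g x = a" for x a using gx un by blast
  have "linear g"
  proof (rule linearI)
    fix x y show "g (x + y) = g x + g y"
      using gM gx geq unfolding good_def by blast
  next
    fix c x show "g (c *\<^sub>R x) = c *\<^sub>R g x"
      using gM gx geq unfolding good_def by simp
  qed
  moreover have "\<forall>x. g x \<le> p x" using gM gx unfolding good_def by blast
  moreover have "\<forall>x a. (x,a)\<in>G0 \<longrightarrow> g x = a" using gM geq unfolding good_def by blast
  ultimately show ?thesis by blast
qed




lemma supp_functional:
  fixes x y :: "'a::real_normed_vector"
  assumes h: "\<forall>t. norm x + t*\<beta> \<le> norm (x + t *\<^sub>R y)"
  shows "\<exists>g::'a\<Rightarrow>\<^sub>Lreal. norm g \<le> 1 \<and> blinfun_apply g x = norm x \<and> blinfun_apply g y = \<beta>"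
proof -
  have b1: "norm x + \<beta> \<le> norm x + norm y" using h[rule_format, of 1] norm_triangle_ineq[of x y] by simp
  have b2: "norm x - \<beta> \<le> norm x + norm y" using h[rule_format, of "-1"] norm_triangle_ineq4[of x y] by simp
  have hb: "\<bar>\<beta>\<bar> \<le> norm y" using b1 b2 by linarith
  define G0 where "G0 = {(a *\<^sub>R x + b *\<^sub>R y, a * norm x + b * \<beta>) | a b. True}"
  have dom: "a * norm x + b * \<beta> \<le> norm (a *\<^sub>R x + b *\<^sub>R y)" for a b
  proof (cases "a > 0")
    case True
    have "a * norm x + b * \<beta> = a * (norm x + (b/a) * \<beta>)" using True by (simp add: field_simps)
    also have "\<dots> \<le> a * norm (x + (b/a) *\<^sub>R y)" using h[rule_format, of "b/a"] True by (intro mult_left_mono) auto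
    also have "\<dots> = norm (a *\<^sub>R (x + (b/a) *\<^sub>R y))" using True by simp
    also have "a *\<^sub>R (x + (b/a) *\<^sub>R y) = a *\<^sub>R x + b *\<^sub>R y" using True by (simp add: algebra_simps)
    finally show ?thesis .
  next
    case False
    have "b * \<beta> \<le> \<bar>b\<bar> * norm y" using hb
      by (metis abs_ge_self abs_mult abs_of_nonneg mult_left_mono abs_ge_zero order_trans)
    moreover have "norm (b *\<^sub>R y) \<le> norm (a *\<^sub>R x + b *\<^sub>R y) + norm (a *\<^sub>R x)"
      by (metis add_diff_cancel_left' norm_triangle_ineq4 add.commute)
    moreover have "a * norm x = - \<bar>a\<bar> * norm x" using False by simp
    ultimately show ?thesis by simp
  qed
  have "good norm G0 G0"
    unfolding good_def
  proof (intro conjI allI impI)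
    show "(0,0) \<in> G0" unfolding G0_def by (rule CollectI, rule exI[of _ 0], rule exI[of _ 0]) simp
    fix u a v b assume "(u,a) \<in> G0" "(v,b) \<in> G0"
    then obtain a1 b1 a2 b2 where "u = a1 *\<^sub>R x + b1 *\<^sub>R y" "a = a1 * norm x + b1 * \<beta>"
      "v = a2 *\<^sub>R x + b2 *\<^sub>R y" "b = a2 * norm x + b2 * \<beta>" unfolding G0_def by blast
    then have "u + v = (a1+a2) *\<^sub>R x + (b1+b2) *\<^sub>R y" "a + b = (a1+a2) * norm x + (b1+b2) * \<beta>"
      by (simp_all add: algebra_simps)
    then show "(u+v,a+b) \<in> G0" unfolding G0_def by blast
  next
    fix c u a assume "(u,a) \<in> G0"
    then obtain a1 b1 where "u = a1 *\<^sub>R x + b1 *\<^sub>R y" "a = a1 * norm x + b1 * \<beta>" unfolding G0_def by blast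
    then have "c *\<^sub>R u = (c*a1) *\<^sub>R x + (c*b1) *\<^sub>R y" "c * a = (c*a1) * norm x + (c*b1) * \<beta>"
      by (simp_all add: algebra_simps)
    then show "(c *\<^sub>R u, c*a) \<in> G0" unfolding G0_def by blast
  next
    fix u a assume "(u,a) \<in> G0"
    then show "a \<le> norm u" unfolding G0_def using dom by blast
  qed simp
  then obtain g where g: "linear g" "\<forall>x. g x \<le> norm x" "\<forall>u a. (u,a)\<in>G0 \<longrightarrow> g u = a"
    using hahn_banach[of norm G0] norm_triangle_ineq by force
  have ab: "\<bar>g u\<bar> \<le> norm u" for u
  proof -
    have "g (-u) = - g u" using g(1) by (simp add: linear_neg)
    then show ?thesis using g(2)[rule_format, of u] g(2)[rule_format, of "-u"] by simp
  qed
  have bl: "bounded_linear g"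
    using g(1) ab by (intro bounded_linear_intro[where K=1]) (auto simp: linear_add linear_scale)
  define G where "G = Blinfun g"
  have Ga: "blinfun_apply G = g" unfolding G_def using bl by (simp add: bounded_linear_Blinfun_apply)
  have "norm G \<le> 1" by (rule norm_blinfun_bound) (use ab Ga in auto)
  moreover have "(x, norm x) \<in> G0" unfolding G0_def by (rule CollectI, rule exI[of _ 1], rule exI[of _ 0]) simp
  moreover have "(y, \<beta>) \<in> G0" unfolding G0_def by (rule CollectI, rule exI[of _ 0], rule exI[of _ 1]) simp
  ultimately show ?thesis using g(3) Ga by metis
qed




lemma sip_bound: assumes "is_sip s" shows "\<bar>s x y\<bar> \<le> norm x * norm y"
proof -
  have a: "(s x y)\<^sup>2 \<le> s x x * s y y" "s x x = (norm x)\<^sup>2" "s y y = (norm y)\<^sup>2"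
    using assms unfolding is_sip_def by blast+
  have "(s x y)\<^sup>2 \<le> (norm x * norm y)\<^sup>2" using a by (simp add: power_mult_distrib)
  then have "\<bar>s x y\<bar>\<^sup>2 \<le> (norm x * norm y)\<^sup>2" by simp
  then show ?thesis by (rule power2_le_imp_le) simp
qed

lemma sip_diff: assumes "is_sip s" shows "s (x - y) z = s x z - s y z"
proof -
  have a: "s (x + (-1) *\<^sub>R y) z = s x z + s ((-1) *\<^sub>R y) z" "s ((-1) *\<^sub>R y) z = (-1) * s y z"
    using assms unfolding is_sip_def by blast+
  have "s (x + (-1) *\<^sub>R y) z = s x z + (-1) * s y z" using a by simp
  then show ?thesis by simp
qed

lemma sip_exists: "\<exists>s::'b::real_normed_vector \<Rightarrow> 'b \<Rightarrow> real. is_sip s"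
proof -
  define R where "R y = (SOME z. \<exists>c. c \<noteq> 0 \<and> z = c *\<^sub>R y)" for y :: 'b
  have R: "\<exists>k. k \<noteq> 0 \<and> R y = k *\<^sub>R y" for y
    unfolding R_def by (rule someI_ex) (rule exI[of _ y], rule exI[of _ 1], simp)
  have Rsc: "R (a *\<^sub>R y) = R y" if "a \<noteq> 0" for a y
  proof -
    have "(\<lambda>z. \<exists>c. c \<noteq> 0 \<and> z = c *\<^sub>R (a *\<^sub>R y)) = (\<lambda>z. \<exists>c. c \<noteq> 0 \<and> z = c *\<^sub>R y)"
    proof (rule ext, rule iffI)
      fix z assume "\<exists>c. c \<noteq> 0 \<and> z = c *\<^sub>R (a *\<^sub>R y)"
      then obtain c where "c \<noteq> 0" "z = c *\<^sub>R (a *\<^sub>R y)" by blast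
      then show "\<exists>c. c \<noteq> 0 \<and> z = c *\<^sub>R y" using that by (intro exI[of _ "c*a"]) simp
    next
      fix z assume "\<exists>c. c \<noteq> 0 \<and> z = c *\<^sub>R y"
      then obtain c where "c \<noteq> 0" "z = c *\<^sub>R y" by blast
      then show "\<exists>c. c \<noteq> 0 \<and> z = c *\<^sub>R (a *\<^sub>R y)" using that by (intro exI[of _ "c/a"]) simp
    qed
    then show ?thesis unfolding R_def by simp
  qed
  define G where "G y = (SOME g::'b\<Rightarrow>\<^sub>Lreal. norm g \<le> 1 \<and> blinfun_apply g (R y) = norm (R y))" for y
  have G: "norm (G y) \<le> 1 \<and> blinfun_apply (G y) (R y) = norm (R y)" for y
  proof -
    have "\<exists>g::'b\<Rightarrow>\<^sub>Lreal. norm g \<le> 1 \<and> blinfun_apply g (R y) = norm (R y)"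
      using supp_functional[of "R y" 0 0] by auto
    then show ?thesis unfolding G_def by (rule someI_ex)
  qed
  have Gyy: "(blinfun_apply (G y) y)\<^sup>2 = (norm y)\<^sup>2" for y
  proof -
    obtain k where k: "k \<noteq> 0" "R y = k *\<^sub>R y" using R by blast
    have "k * blinfun_apply (G y) y = \<bar>k\<bar> * norm y" using G[of y] k by (simp add: blinfun.scaleR_right)
    then have "k\<^sup>2 * (blinfun_apply (G y) y)\<^sup>2 = k\<^sup>2 * (norm y)\<^sup>2"
      by (metis power2_abs power_mult_distrib)
    then show ?thesis using k by simp
  qed
  have Gb: "\<bar>blinfun_apply (G y) x\<bar> \<le> norm x" for x y
  proof -
    have "\<bar>blinfun_apply (G y) x\<bar> \<le> norm (G y) * norm x" using norm_blinfun[of "G y" x] by simp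
    also have "\<dots> \<le> norm x" using G[of y] by (simp add: mult_left_le_one_le)
    finally show ?thesis .
  qed
  define s where "s x y = blinfun_apply (G y) y * blinfun_apply (G y) x" for x y
  have "is_sip s"
    unfolding is_sip_def
  proof (intro conjI allI)
    fix x y z show "s (x + y) z = s x z + s y z" unfolding s_def by (simp add: blinfun.add_right algebra_simps)
  next
    fix a :: real and x y show "s (a *\<^sub>R x) y = a * s x y" unfolding s_def by (simp add: blinfun.scaleR_right)
  next
    fix a :: real and x y show "s x (a *\<^sub>R y) = a * s x y"
    proof (cases "a = 0")
      case True then show ?thesis unfolding s_def by (simp add: blinfun.zero_right)
    next
      case False
      have "G (a *\<^sub>R y) = G y" unfolding G_def using Rsc[OF False] by simp
      then show ?thesis unfolding s_def by (simp add: blinfun.scaleR_right)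
    qed
  next
    fix x show "s x x = (norm x)\<^sup>2" unfolding s_def using Gyy[of x] by (simp add: power2_eq_square)
  next
    fix x y
    have "(s x y)\<^sup>2 = (norm y)\<^sup>2 * (blinfun_apply (G y) x)\<^sup>2" unfolding s_def
      using Gyy[of y] by (simp add: power_mult_distrib)
    also have "\<dots> \<le> (norm y)\<^sup>2 * (norm x)\<^sup>2"
      using power_mono[OF Gb[of y x], of 2] by (intro mult_left_mono) auto
    also have "\<dots> = s x x * s y y" unfolding s_def using Gyy[of x] Gyy[of y] by (simp add: power2_eq_square)
    finally show "(s x y)\<^sup>2 \<le> s x x * s y y" .
  qed
  then show ?thesis by blast
qed

lemma norming_exists:
  fixes T :: "'a::real_normed_vector \<Rightarrow>\<^sub>L 'b::real_normed_vector"
  assumes "T \<noteq> 0" shows "\<exists>xs. norming_seq T xs"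
proof -
  have nT: "norm T > 0" using assms by simp
  have ex: "\<exists>x. norm x = 1 \<and> norm T - norm T / real (Suc n) < norm (blinfun_apply T x)" for n
  proof (rule ccontr)
    define K where "K = norm T - norm T / real (Suc n)"
    assume "\<not> ?thesis"
    then have H: "norm x = 1 \<Longrightarrow> norm (blinfun_apply T x) \<le> K" for x unfolding K_def by force
    have K0: "0 \<le> K" unfolding K_def using nT
      by (simp add: field_simps)
    have "norm T \<le> K"
    proof (rule norm_blinfun_bound[OF K0])
      fix x show "norm (blinfun_apply T x) \<le> K * norm x"
      proof (cases "x = 0")
        case True then show ?thesis by simp
      next
        case False
        have "norm (blinfun_apply T ((1/norm x) *\<^sub>R x)) \<le> K" using H False by simp
        then have "(1/norm x) * norm (blinfun_apply T x) \<le> K" by (simp add: blinfun.scaleR_right)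
        then show ?thesis using False by (simp add: field_simps)
      qed
    qed
    moreover have "K < norm T" unfolding K_def using nT by simp
    ultimately show False by simp
  qed
  then obtain xs where xs: "\<And>n. norm (xs n) = 1"
    "\<And>n. norm T - norm T / real (Suc n) < norm (blinfun_apply T (xs n))" by metis
  have up: "norm (blinfun_apply T (xs n)) \<le> norm T" for n using norm_blinfun[of T "xs n"] xs(1) by simp
  have lo: "(\<lambda>n. norm T - norm T / real (Suc n)) \<longlonglongrightarrow> norm T"
    using tendsto_diff[OF tendsto_const LIMSEQ_Suc[OF lim_const_over_n[of "norm T"]]] by simp
  have "(\<lambda>n. norm (blinfun_apply T (xs n))) \<longlonglongrightarrow> norm T"
    by (rule tendsto_sandwich[OF _ _ lo tendsto_const]) (use xs(2) up less_imp_le in \<open>auto intro!: always_eventually\<close>)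
  then show ?thesis unfolding norming_seq_def using xs(1) by blast
qed

lemma seq_bounded:
  assumes "is_sip s" "norming_seq T xs"
  shows "bounded (range (\<lambda>n. s (blinfun_apply A (xs n)) (blinfun_apply T (xs n))))"
proof -
  have "\<bar>s (blinfun_apply A (xs n)) (blinfun_apply T (xs n))\<bar> \<le> norm A * norm T" for n
  proof -
    have u: "norm (xs n) = 1" using assms(2) unfolding norming_seq_def by blast
    have "\<bar>s (blinfun_apply A (xs n)) (blinfun_apply T (xs n))\<bar> \<le> norm (blinfun_apply A (xs n)) * norm (blinfun_apply T (xs n))"
      by (rule sip_bound[OF assms(1)])
    also have "\<dots> \<le> norm A * norm T"
      using norm_blinfun[of A "xs n"] norm_blinfun[of T "xs n"] u by (intro mult_mono) auto
    finally show ?thesis .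
  qed
  then show ?thesis unfolding bounded_iff by auto
qed

lemma limit_exists:
  assumes "is_sip s" "norming_seq T xs"
  shows "\<exists>L. subseq_limit (\<lambda>n. s (blinfun_apply A (xs n)) (blinfun_apply T (xs n))) L"
  using bounded_imp_convergent_subsequence[OF seq_bounded[OF assms]] unfolding subseq_limit_def by blast

lemma lb:
  assumes sip: "is_sip s" and ns: "norming_seq T xs" and r: "strict_mono r"
    and lim: "((\<lambda>n. s (blinfun_apply A (xs n)) (blinfun_apply T (xs n))) \<circ> r) \<longlonglongrightarrow> L"
    and T0: "T \<noteq> 0"
  shows "norm T + t * (L / norm T) \<le> norm (T + t *\<^sub>R A)"
proof -
  have nT: "norm T > 0" using T0 by simp
  have ineq: "(norm (blinfun_apply T (xs n)))\<^sup>2 + t * s (blinfun_apply A (xs n)) (blinfun_apply T (xs n))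
      \<le> norm (T + t *\<^sub>R A) * norm (blinfun_apply T (xs n))" for n
  proof -
    let ?x = "xs n"
    have u: "norm ?x = 1" using ns unfolding norming_seq_def by blast
    have "(norm (blinfun_apply T ?x))\<^sup>2 + t * s (blinfun_apply A ?x) (blinfun_apply T ?x)
        = s (blinfun_apply T ?x + t *\<^sub>R blinfun_apply A ?x) (blinfun_apply T ?x)"
      using sip unfolding is_sip_def by simp
    also have "\<dots> \<le> norm (blinfun_apply T ?x + t *\<^sub>R blinfun_apply A ?x) * norm (blinfun_apply T ?x)"
      using sip_bound[OF sip] abs_ge_self order_trans by blast
    also have "blinfun_apply T ?x + t *\<^sub>R blinfun_apply A ?x = blinfun_apply (T + t *\<^sub>R A) ?x"
      by (simp add: blinfun.add_left blinfun.scaleR_left)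
    also have "norm (blinfun_apply (T + t *\<^sub>R A) ?x) * norm (blinfun_apply T ?x) \<le> norm (T + t *\<^sub>R A) * norm (blinfun_apply T ?x)"
      using norm_blinfun[of "T + t *\<^sub>R A" ?x] u by (intro mult_right_mono) auto
    finally show ?thesis .
  qed
  have nr: "(\<lambda>n. norm (blinfun_apply T (xs (r n)))) \<longlonglongrightarrow> norm T"
    using LIMSEQ_subseq_LIMSEQ[OF _ r, of "\<lambda>n. norm (blinfun_apply T (xs n))"] ns
    unfolding norming_seq_def by (simp add: o_def)
  have l1: "(\<lambda>n. (norm (blinfun_apply T (xs (r n))))\<^sup>2 + t * s (blinfun_apply A (xs (r n))) (blinfun_apply T (xs (r n))))
     \<longlonglongrightarrow> (norm T)\<^sup>2 + t * L"
    using lim unfolding o_def by (intro tendsto_intros nr)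
  have l2: "(\<lambda>n. norm (T + t *\<^sub>R A) * norm (blinfun_apply T (xs (r n)))) \<longlonglongrightarrow> norm (T + t *\<^sub>R A) * norm T"
    by (intro tendsto_intros nr)
  have "(norm T)\<^sup>2 + t * L \<le> norm (T + t *\<^sub>R A) * norm T"
    by (rule LIMSEQ_le[OF l1 l2]) (use ineq in auto)
  moreover have "(norm T + t * (L / norm T)) * norm T = (norm T)\<^sup>2 + t * L"
    using nT by (simp add: field_simps power2_eq_square)
  ultimately have "(norm T + t * (L / norm T)) * norm T \<le> norm (T + t *\<^sub>R A) * norm T"
    by simp
  then show ?thesis using nT by simp
qed




definition condC :: "('a::real_normed_vector \<Rightarrow>\<^sub>L 'b::real_normed_vector) \<Rightarrow> ('a \<Rightarrow>\<^sub>L 'b) \<Rightarrow> bool" where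
  "condC T A \<longleftrightarrow> (\<forall>s :: 'b \<Rightarrow> 'b \<Rightarrow> real. is_sip s \<longrightarrow>
          (\<forall>xs. norming_seq T xs \<longrightarrow>
             (\<forall>L. subseq_limit (\<lambda>n. s (blinfun_apply A (xs n)) (blinfun_apply T (xs n))) L \<longrightarrow> L = 0)))"

lemma condC_diff:
  assumes CA: "condC T A" and CB: "condC T B" shows "condC T (A - B)"
  unfolding condC_def
proof (intro allI impI)
  fix s :: "'b \<Rightarrow> 'b \<Rightarrow> real" and xs L
  assume sip: "is_sip s" and ns: "norming_seq T xs"
    and sl: "subseq_limit (\<lambda>n. s (blinfun_apply (A - B) (xs n)) (blinfun_apply T (xs n))) L"
  define a where "a n = s (blinfun_apply A (xs n)) (blinfun_apply T (xs n))" for n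
  define b where "b n = s (blinfun_apply B (xs n)) (blinfun_apply T (xs n))" for n
  have d: "(\<lambda>n. s (blinfun_apply (A - B) (xs n)) (blinfun_apply T (xs n))) = (\<lambda>n. a n - b n)"
    unfolding a_def b_def by (simp add: blinfun.diff_left sip_diff[OF sip])
  obtain r where r: "strict_mono r" "((\<lambda>n. a n - b n) \<circ> r) \<longlonglongrightarrow> L"
    using sl unfolding subseq_limit_def d by blast
  have "bounded (range a)" unfolding a_def by (rule seq_bounded[OF sip ns])
  then have "bounded (range (a \<circ> r))" by (rule bounded_subset) auto
  then obtain La r' where r': "strict_mono r'" "((a \<circ> r) \<circ> r') \<longlonglongrightarrow> La"
    using bounded_imp_convergent_subsequence by blast
  have sm: "strict_mono (r \<circ> r')" using r r' by (simp add: strict_mono_o)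
  have "subseq_limit a La" unfolding subseq_limit_def using sm r' by (auto simp: o_assoc)
  then have La: "La = 0" using CA sip ns unfolding condC_def a_def by blast
  have dl: "((\<lambda>n. a n - b n) \<circ> (r \<circ> r')) \<longlonglongrightarrow> L"
    using LIMSEQ_subseq_LIMSEQ[OF r(2) r'(1)] by (simp add: o_assoc)
  have "(b \<circ> (r \<circ> r')) \<longlonglongrightarrow> La - L"
  proof -
    have "(\<lambda>n. ((a \<circ> r) \<circ> r') n - ((\<lambda>n. a n - b n) \<circ> (r \<circ> r')) n) \<longlonglongrightarrow> La - L"
      by (intro tendsto_diff r'(2) dl)
    then show ?thesis by (simp add: o_def)
  qed
  then have "subseq_limit b (La - L)" unfolding subseq_limit_def using sm by blast
  then have "La - L = 0" using CB sip ns unfolding condC_def b_def by blast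
  then show "L = 0" using La by simp
qed

lemma condC_scale:
  assumes CA: "condC T A" shows "condC T (c *\<^sub>R A)"
  unfolding condC_def
proof (intro allI impI)
  fix s :: "'b \<Rightarrow> 'b \<Rightarrow> real" and xs L
  assume sip: "is_sip s" and ns: "norming_seq T xs"
    and sl: "subseq_limit (\<lambda>n. s (blinfun_apply (c *\<^sub>R A) (xs n)) (blinfun_apply T (xs n))) L"
  define a where "a n = s (blinfun_apply A (xs n)) (blinfun_apply T (xs n))" for n
  have d: "(\<lambda>n. s (blinfun_apply (c *\<^sub>R A) (xs n)) (blinfun_apply T (xs n))) = (\<lambda>n. c * a n)"
    unfolding a_def using sip unfolding is_sip_def by (simp add: blinfun.scaleR_left)
  obtain r where r: "strict_mono r" "((\<lambda>n. c * a n) \<circ> r) \<longlonglongrightarrow> L"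
    using sl unfolding subseq_limit_def d by blast
  show "L = 0"
  proof (cases "c = 0")
    case True
    then have "((\<lambda>n. c * a n) \<circ> r) = (\<lambda>n. 0)" by (simp add: o_def)
    then have "(\<lambda>n. 0::real) \<longlonglongrightarrow> L" using r(2) by simp
    then show ?thesis by (simp add: LIMSEQ_const_iff)
  next
    case False
    have "(\<lambda>n. (1/c) * ((\<lambda>n. c * a n) \<circ> r) n) \<longlonglongrightarrow> (1/c) * L"
      by (intro tendsto_intros r(2))
    then have "(a \<circ> r) \<longlonglongrightarrow> L / c" using False by (simp add: o_def)
    then have "subseq_limit a (L/c)" unfolding subseq_limit_def using r(1) by blast
    then have "L / c = 0" using CA sip ns unfolding condC_def a_def by blast
    then show ?thesis using False by simp
  qed
qed

lemma support_norm:
  fixes g :: "'a::real_normed_vector \<Rightarrow>\<^sub>L real"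
  assumes "norm g \<le> 1" "blinfun_apply g x = norm x" "x \<noteq> 0" shows "norm g = 1"
proof -
  have "norm x \<le> norm g * norm x" using norm_blinfun[of g x] assms(2) by simp
  then have "1 \<le> norm g" using assms(3) by simp
  then show ?thesis using assms(1) by simp
qed

lemma ker_orth:
  fixes T :: "'a::real_normed_vector"
  assumes "norm h \<le> 1" "blinfun_apply h T = norm T" "blinfun_apply h D = 0"
  shows "bj_orth T D"
  unfolding bj_orth_def
proof
  fix t :: real
  have "norm T = blinfun_apply h (T + t *\<^sub>R D)" using assms by (simp add: blinfun.add_right blinfun.scaleR_right)
  also have "\<dots> \<le> norm h * norm (T + t *\<^sub>R D)" using norm_blinfun[of h "T + t *\<^sub>R D"] by simp
  also have "\<dots> \<le> norm (T + t *\<^sub>R D)" using assms(1) by (simp add: mult_left_le_one_le)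
  finally show "norm T \<le> norm (T + t *\<^sub>R D)" .
qed




lemma main:
  fixes T :: "'a::real_normed_vector \<Rightarrow>\<^sub>L 'b::real_normed_vector"
  assumes T0: "T \<noteq> 0"
  shows "smooth_point T \<longleftrightarrow> (\<forall>A. bj_orth T A \<longleftrightarrow> condC T A)"
proof
  assume "smooth_point T"
  then have "\<exists>!f :: ('a \<Rightarrow>\<^sub>L 'b) \<Rightarrow>\<^sub>L real. norm f = 1 \<and> blinfun_apply f T = norm T"
    unfolding smooth_point_def by blast
  then obtain F where F0: "norm F = 1 \<and> blinfun_apply F T = norm T"
    and uq0: "\<forall>g. norm g = 1 \<and> blinfun_apply g T = norm T \<longrightarrow> g = F"
    by (rule ex1E) blast
  have F: "norm F = 1" "blinfun_apply F T = norm T" using F0 by auto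
  have uq: "\<And>g. norm g = 1 \<Longrightarrow> blinfun_apply g T = norm T \<Longrightarrow> g = F" using uq0 by blast
  have sup: "g = F" if "norm g \<le> 1" "blinfun_apply g T = norm T" for g
    using uq support_norm[OF that T0] that by blast
  show "\<forall>A. bj_orth T A \<longleftrightarrow> condC T A"
  proof (intro allI iffI)
    fix A assume "bj_orth T A"
    then have "\<forall>t. norm T + t * 0 \<le> norm (T + t *\<^sub>R A)" unfolding bj_orth_def by simp
    from supp_functional[OF this] obtain g where g: "norm g \<le> 1" "blinfun_apply g T = norm T" "blinfun_apply g A = 0"
      by blast
    have "g = F" by (rule sup[OF g(1,2)])
    then have FA: "blinfun_apply F A = 0" using g(3) by simp
    show "condC T A" unfolding condC_def
    proof (intro allI impI)
      fix s :: "'b \<Rightarrow> 'b \<Rightarrow> real" and xs L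
      assume sip: "is_sip s" and ns: "norming_seq T xs"
        and sl: "subseq_limit (\<lambda>n. s (blinfun_apply A (xs n)) (blinfun_apply T (xs n))) L"
      obtain r where r: "strict_mono r" "((\<lambda>n. s (blinfun_apply A (xs n)) (blinfun_apply T (xs n))) \<circ> r) \<longlonglongrightarrow> L"
        using sl unfolding subseq_limit_def by blast
      have "\<forall>t. norm T + t * (L / norm T) \<le> norm (T + t *\<^sub>R A)" using lb[OF sip ns r T0] by blast
      from supp_functional[OF this] obtain g where g: "norm g \<le> 1" "blinfun_apply g T = norm T"
        "blinfun_apply g A = L / norm T" by blast
      have "g = F" by (rule sup[OF g(1,2)])
      then have "L / norm T = 0" using g(3) FA by simp
      then show "L = 0" using T0 by simp
    qed
  next
    fix A assume C: "condC T A"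
    obtain s :: "'b \<Rightarrow> 'b \<Rightarrow> real" where sip: "is_sip s" using sip_exists by blast
    obtain xs where ns: "norming_seq T xs" using norming_exists[OF T0] by blast
    obtain L where sl: "subseq_limit (\<lambda>n. s (blinfun_apply A (xs n)) (blinfun_apply T (xs n))) L"
      using limit_exists[OF sip ns] by blast
    have L0: "L = 0" using C unfolding condC_def using sip ns sl by simp
    obtain r where r: "strict_mono r" "((\<lambda>n. s (blinfun_apply A (xs n)) (blinfun_apply T (xs n))) \<circ> r) \<longlonglongrightarrow> L"
      using sl unfolding subseq_limit_def by blast
    show "bj_orth T A" unfolding bj_orth_def using lb[OF sip ns r T0] L0 by simp
  qed
next
  assume H: "\<forall>A. bj_orth T A \<longleftrightarrow> condC T A"
  have nT: "norm T > 0" using T0 by simp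
  obtain g0 where g0: "norm g0 \<le> 1" "blinfun_apply g0 T = norm T"
    using supp_functional[of T 0 0] by auto
  have g0n: "norm g0 = 1" using support_norm[OF g0 T0] .
  have notT: "\<not> condC T T"
  proof
    assume "condC T T"
    then have "bj_orth T T" using H by blast
    then have "norm T \<le> norm (T + (-1) *\<^sub>R T)" unfolding bj_orth_def by blast
    then show False using nT by simp
  qed
  have uniq: "f = g" if f: "norm f = 1" "blinfun_apply f T = norm T" and g: "norm g = 1" "blinfun_apply g T = norm T"
    for f g :: "('a \<Rightarrow>\<^sub>L 'b) \<Rightarrow>\<^sub>L real"
  proof (rule blinfun_eqI)
    fix A
    define D1 where "D1 = A - (blinfun_apply f A / norm T) *\<^sub>R T"
    define D2 where "D2 = A - (blinfun_apply g A / norm T) *\<^sub>R T"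
    have "blinfun_apply f D1 = 0" unfolding D1_def using f nT
      by (simp add: blinfun.diff_right blinfun.scaleR_right)
    then have C1: "condC T D1" using H ker_orth[of f T D1] f by simp
    have "blinfun_apply g D2 = 0" unfolding D2_def using g nT
      by (simp add: blinfun.diff_right blinfun.scaleR_right)
    then have C2: "condC T D2" using H ker_orth[of g T D2] g by simp
    have C3: "condC T (D2 - D1)" by (rule condC_diff[OF C2 C1])
    have eq: "D2 - D1 = ((blinfun_apply f A - blinfun_apply g A) / norm T) *\<^sub>R T"
      unfolding D1_def D2_def by (simp add: algebra_simps diff_divide_distrib)
    show "blinfun_apply f A = blinfun_apply g A"
    proof (rule ccontr)
      assume ne: "blinfun_apply f A \<noteq> blinfun_apply g A"
      have "condC T ((norm T / (blinfun_apply f A - blinfun_apply g A)) *\<^sub>R (D2 - D1))"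
        by (rule condC_scale[OF C3])
      moreover have "(norm T / (blinfun_apply f A - blinfun_apply g A)) *\<^sub>R (D2 - D1) = T"
        unfolding eq using ne nT by simp
      ultimately show False using notT by simp
    qed
  qed
  have "\<exists>!f :: ('a \<Rightarrow>\<^sub>L 'b) \<Rightarrow>\<^sub>L real. norm f = 1 \<and> blinfun_apply f T = norm T"
  proof (rule ex1I[of _ g0])
    show "norm g0 = 1 \<and> blinfun_apply g0 T = norm T" using g0n g0(2) by simp
  next
    fix f :: "('a \<Rightarrow>\<^sub>L 'b) \<Rightarrow>\<^sub>L real" assume "norm f = 1 \<and> blinfun_apply f T = norm T"
    then show "f = g0" using uniq[of f g0] g0n g0(2) by blast
  qed
  then show "smooth_point T" unfolding smooth_point_def using T0 by blast
qed

theorem theorem2p1: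
  fixes T :: "'a::real_normed_vector \<Rightarrow>\<^sub>L 'b::real_normed_vector"
  assumes "T \<noteq> 0"
  shows "smooth_point T \<longleftrightarrow>
    (\<forall>A :: 'a \<Rightarrow>\<^sub>L 'b. bj_orth T A \<longleftrightarrow>
       (\<forall>s :: 'b \<Rightarrow> 'b \<Rightarrow> real. is_sip s \<longrightarrow>
          (\<forall>xs. norming_seq T xs \<longrightarrow>
             (\<forall>L. subseq_limit (\<lambda>n. s (blinfun_apply A (xs n)) (blinfun_apply T (xs n))) L \<longrightarrow> L = 0))))"
  using main[OF assms] unfolding condC_def .


end
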